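(* Let scalar functions $S_n(t),\bar S_n(t),v_n(t)$ ($n\in\mathbb{Z}$) satisfy \begin{align*} \mathrm{i}\,S_{n,t}&=v_n(S_{n+1}+S_{n-1})-cS_n,\qquad \mathrm{i}\,\bar S_{n,t}=-v_n(\bar S_{n+1}+\bar S_{n-1})+c\bar S_n,\\ v_{n,t}&=\tfrac12 v_n\,\Delta_n^+\big(S_n\bar S_{n-1}+S_{n-1}\bar S_n\big), \end{align*} with $c$ constant. Then \begin{align*} &\Big\{v_n(S_{n+1}+S_{n-1})(\bar S_{n+1}+\bar S_{n-1})+\tfrac{\mathrm{i}}{4}\big[(S_{n+1}\bar S_n)^2-(S_n\bar S_{n+1})^2\big]\Big\}_t\\ &=\Delta_n^+\Big\{-\mathrm{i}\,v_nv_{n-1}\big[(S_{n+1}+S_{n-1})(\bar S_n+\bar S_{n-2})-(S_n+S_{n-2})(\bar S_{n+1}+\bar S_{n-1})\big]\\ &\qquad+\tfrac12 v_n\big[S_{n-1}\bar S_{n-1}(S_n\bar S_{n-1}+S_{n-1}\bar S_n)+S_{n+1}\bar S_{n-1}S_n\bar S_{n-1}+S_{n-1}\bar S_{n+1}S_{n-1}\bar S_n\big]\Big\}. \end{align*}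
   Context: $\Delta_n^+f_n:=f_{n+1}-f_n$; $\bar S_n$ is an independent variable (not necessarily the complex conjugate of $S_n$). *)

theory Defs
  imports "HOL-Analysis.Analysis"
begin

end

theory Submission
  imports Defs
begin

lemma key:
  fixes j c v0 vm vp S0 S1 Sm S2 Sm2 B0 B1 Bm B2 Bm2 :: complex
  assumes "j*j = -1"
  shows "(1/2 * v0 * ((S1*B0 + S0*B1) - (S0*Bm + Sm*B0))) * (S1 + Sm) * (B1 + Bm)
   + v0 * ((-j*(vp*(S2+S0) - c*S1)) + (-j*(vm*(S0+Sm2) - c*Sm))) * (B1+Bm)
   + v0 * (S1+Sm) * ((-j*(-vp*(B2+B0) + c*B1)) + (-j*(-vm*(B0+Bm2) + c*Bm)))
   + j/4 * (2*(S1*B0)*((-j*(vp*(S2+S0) - c*S1))*B0 + S1*(-j*(-v0*(B1+Bm) + c*B0)))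
            - 2*(S0*B1)*((-j*(v0*(S1+Sm) - c*S0))*B1 + S0*(-j*(-vp*(B2+B0) + c*B1))))
   = (- j * vp * v0 * ((S2 + S0) * (B1 + Bm) - (S1 + Sm) * (B2 + B0))
      + 1/2 * vp * (S0 * B0 * (S1 * B0 + S0 * B1) + S2 * B0 * S1 * B0 + S0 * B2 * S0 * B1))
   - (- j * v0 * vm * ((S1 + Sm) * (B0 + Bm2) - (S0 + Sm2) * (B1 + Bm))
      + 1/2 * v0 * (Sm * Bm * (S0 * Bm + Sm * B0) + S1 * Bm * S0 * Bm + Sm * B1 * Sm * B0))"
  using assms by algebra

theorem mainTheorem7:
  fixes S Sb v S' Sb' v' :: "int \<Rightarrow> real \<Rightarrow> complex" and c :: complex
  assumes dS: "\<And>n t. (S n has_vector_derivative S' n t) (at t)"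
      and dSb: "\<And>n t. (Sb n has_vector_derivative Sb' n t) (at t)"
      and dv: "\<And>n t. (v n has_vector_derivative v' n t) (at t)"
      and eqS: "\<And>n t. \<i> * S' n t = v n t * (S (n+1) t + S (n-1) t) - c * S n t"
      and eqSb: "\<And>n t. \<i> * Sb' n t = - v n t * (Sb (n+1) t + Sb (n-1) t) + c * Sb n t"
      and eqv: "\<And>n t. v' n t = 1/2 * v n t *
                 ((S (n+1) t * Sb n t + S n t * Sb (n+1) t) - (S n t * Sb (n-1) t + S (n-1) t * Sb n t))"
  shows "((\<lambda>t. v n t * (S (n+1) t + S (n-1) t) * (Sb (n+1) t + Sb (n-1) t)
              + \<i>/4 * ((S (n+1) t * Sb n t)^2 - (S n t * Sb (n+1) t)^2))
          has_vector_derivative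
          (let G = (\<lambda>m. - \<i> * v m t * v (m-1) t *
                       ((S (m+1) t + S (m-1) t) * (Sb m t + Sb (m-2) t)
                        - (S m t + S (m-2) t) * (Sb (m+1) t + Sb (m-1) t))
                     + 1/2 * v m t * (S (m-1) t * Sb (m-1) t * (S m t * Sb (m-1) t + S (m-1) t * Sb m t)
                        + S (m+1) t * Sb (m-1) t * S m t * Sb (m-1) t
                        + S (m-1) t * Sb (m+1) t * S (m-1) t * Sb m t))
           in G (n+1) - G n)) (at t)"
proof -
  have Se: "\<And>k. S' k t = -\<i>*(v k t*(S (k+1) t + S (k-1) t) - c*S k t)"
  proof -
    fix k
    have "S' k t = -\<i>*(\<i>*S' k t)" by (simp add: mult.assoc[symmetric])
    then show "S' k t = -\<i>*(v k t*(S (k+1) t + S (k-1) t) - c*S k t)" by (simp only: eqS)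
  qed
  have Be: "\<And>k. Sb' k t = -\<i>*(- v k t*(Sb (k+1) t + Sb (k-1) t) + c*Sb k t)"
  proof -
    fix k
    have "Sb' k t = -\<i>*(\<i>*Sb' k t)" by (simp add: mult.assoc[symmetric])
    then show "Sb' k t = -\<i>*(- v k t*(Sb (k+1) t + Sb (k-1) t) + c*Sb k t)" by (simp only: eqSb)
  qed
  have D: "((\<lambda>t. v n t * (S (n+1) t + S (n-1) t) * (Sb (n+1) t + Sb (n-1) t)
              + \<i>/4 * ((S (n+1) t * Sb n t)*(S (n+1) t * Sb n t) - (S n t * Sb (n+1) t)*(S n t * Sb (n+1) t)))
          has_vector_derivative
           (v n t * (S (n+1) t + S (n-1) t) * (Sb' (n+1) t + Sb' (n-1) t)
             + (v n t * (S' (n+1) t + S' (n-1) t) + v' n t * (S (n+1) t + S (n-1) t)) * (Sb (n+1) t + Sb (n-1) t)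
             + \<i>/4 * ((S (n+1) t * Sb n t) * (S (n+1) t * Sb' n t + S' (n+1) t * Sb n t)
                 + (S (n+1) t * Sb' n t + S' (n+1) t * Sb n t) * (S (n+1) t * Sb n t)
                 - ((S n t * Sb (n+1) t) * (S n t * Sb' (n+1) t + S' n t * Sb (n+1) t)
                 + (S n t * Sb' (n+1) t + S' n t * Sb (n+1) t) * (S n t * Sb (n+1) t)))))
          (at t)"
    by (intro has_vector_derivative_add has_vector_derivative_mult has_vector_derivative_mult_right
          has_vector_derivative_diff dS dSb dv)
  have n1: "n + 1 + 1 = n + 2" "n + 1 - 1 = n" "n+1-2 = n - 1" "n - 1 + 1 = n" "n - 1 - 1 = n - 2"
    by simp_all
  show ?thesis
    unfolding Let_def power2_eq_square
    apply (rule has_vector_derivative_eq_rhs[OF D])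
    unfolding Se Be eqv n1
    using complex_i_mult_minus[of 1] by algebra
qed

end
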